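(* Let $d_1,d_2\ge1$ be integers, not both equal to $1$, and $s_1,s_2$ real numbers, and define $$h_a(x_1,x_2)=\int_{-1}^1(1+x_1z)^{d_1}(1+x_2z)^{d_2}\big(x_a(x_as_a-1)(1-z^2)+z(1-x_a^2)\big)\,dz,\qquad a=1,2.$$ If $s_1<1$ and $s_2<1$, then there exist $x_1,x_2\in(0,1)$ with $h_1(x_1,x_2)=0=h_2(x_1,x_2)$. *)

theory Defs
  imports "HOL-Analysis.Analysis"
begin

definition h_fun :: "nat \<Rightarrow> nat \<Rightarrow> real \<Rightarrow> real \<Rightarrow> real \<Rightarrow> real \<Rightarrow> real" where
  "h_fun d1 d2 xa sa x1 x2 =
     integral {-1..1} (\<lambda>z. (1 + x1 * z) ^ d1 * (1 + x2 * z) ^ d2 *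
        (xa * (xa * sa - 1) * (1 - z^2) + z * (1 - xa^2)))"

end

theory Submission
  imports Defs
begin

definition PP :: "nat \<Rightarrow> nat \<Rightarrow> real \<Rightarrow> real \<Rightarrow> real \<Rightarrow> real" where
  "PP d1 d2 x1 x2 z = (1 + x1 * z) ^ d1 * (1 + x2 * z) ^ d2"

definition DP :: "nat \<Rightarrow> nat \<Rightarrow> real \<Rightarrow> real \<Rightarrow> real \<Rightarrow> real" where
  "DP d1 d2 x1 x2 z = real d1 * (1 + x1 * z) ^ (d1 - 1) * x1 * (1 + x2 * z) ^ d2
     + real d2 * (1 + x2 * z) ^ (d2 - 1) * x2 * (1 + x1 * z) ^ d1"

lemma PP_deriv:
  "((\<lambda>z. (1 - z^2) * PP d1 d2 x1 x2 z) has_real_derivative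
     (-2 * z * PP d1 d2 x1 x2 z + (1 - z^2) * DP d1 d2 x1 x2 z)) (at z within S)"
  unfolding PP_def DP_def
  apply (rule derivative_eq_intros refl | simp)+
  done

lemma ibp:
  "h_fun d1 d2 xa sa x1 x2 = integral {-1..1}
     (\<lambda>z. (1 - z^2) * (xa * (xa * sa - 1) * PP d1 d2 x1 x2 z + (1 - xa^2) / 2 * DP d1 d2 x1 x2 z))"
proof -
  let ?f = "\<lambda>z. (1 + x1 * z) ^ d1 * (1 + x2 * z) ^ d2 *
        (xa * (xa * sa - 1) * (1 - z^2) + z * (1 - xa^2))"
  let ?F = "\<lambda>z. -2 * z * PP d1 d2 x1 x2 z + (1 - z^2) * DP d1 d2 x1 x2 z"
  have F: "(?F has_integral 0) {-1..1}"
  proof -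
    have "(?F has_integral ((1 - 1^2) * PP d1 d2 x1 x2 1 - (1 - (-1)^2) * PP d1 d2 x1 x2 (-1))) {-1..(1::real)}"
      apply (rule fundamental_theorem_of_calculus)
       apply simp
      using PP_deriv has_real_derivative_iff_has_vector_derivative by blast
    then show ?thesis by simp
  qed
  have fi: "(?f has_integral integral {-1..1} ?f) {-1..1}"
    by (intro integrable_integral integrable_continuous_interval continuous_intros)
  have "((\<lambda>z. ?f z + (1 - xa^2) / 2 * ?F z) has_integral (integral {-1..1} ?f + (1 - xa^2) / 2 * 0)) {-1..1}"
    by (intro has_integral_add fi has_integral_mult_right F)
  moreover have "(\<lambda>z. ?f z + (1 - xa^2) / 2 * ?F z) =
     (\<lambda>z. (1 - z^2) * (xa * (xa * sa - 1) * PP d1 d2 x1 x2 z + (1 - xa^2) / 2 * DP d1 d2 x1 x2 z))"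
    by (rule ext) (simp add: PP_def field_simps power2_eq_square)
  ultimately show ?thesis
    unfolding h_fun_def by (simp add: integral_unique)
qed


lemma Q_nonneg:
  fixes e x z s D1 D2 :: real
  assumes "0 < e" "e < 1" "e \<le> x" "x \<le> 1" "-1 \<le> z" "z \<le> 1" "D1 \<ge> 0" "D2 \<ge> 0" "D1 + D2 \<ge> 3"
    "e * (3/2 - s) \<le> 1/2" "e * s \<le> 1"
  shows "0 \<le> e * (e * s - 1) * (1 + e * z) * (1 + x * z) + (1 - e^2) / 2 * (D1 * e * (1 + x * z) + D2 * x * (1 + e * z))"
proof -
  define u where "u = 1 + e * z"
  define v where "v = 1 + x * z"
  have ax: "\<bar>x * z\<bar> \<le> 1" unfolding abs_mult using assms by (intro mult_le_one) auto
  have ae: "\<bar>e * z\<bar> \<le> e" unfolding abs_mult using assms by (simp add: mult_left_le)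
  have v0: "v \<ge> 0" unfolding v_def using ax by (simp add: abs_le_iff)
  have u0: "u \<ge> 0" "u \<le> 1 + e" unfolding u_def using ae assms by (auto simp add: abs_le_iff)
  have h1: "x * u - e * v = x - e" unfolding u_def v_def by (simp add: algebra_simps)
  have h1': "x * u \<ge> e * v" using h1 assms by simp
  have "D2 * (x * u) \<ge> D2 * (e * v)" using h1' assms by (simp add: mult_left_mono)
  then have h2: "D1 * e * v + D2 * x * u \<ge> (D1 + D2) * (e * v)" by (simp add: algebra_simps)
  have "(D1 + D2) * (e * v) \<ge> 3 * (e * v)" using assms v0 by (intro mult_right_mono) auto
  with h2 have h2': "D1 * e * v + D2 * x * u \<ge> 3 * (e * v)" by linarith
  have e2: "1 - e^2 \<ge> 0" using assms by (simp add: abs_le_iff power_le_one)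
  have h2'': "(1 - e^2) / 2 * (D1 * e * v + D2 * x * u) \<ge> (1 - e^2) / 2 * (3 * (e * v))"
    using h2' e2 by (intro mult_left_mono) auto
  have es: "e * (1 - e * s) \<ge> 0" using assms by simp
  have "u * v \<le> (1 + e) * v" using u0 v0 by (intro mult_right_mono) auto
  then have "e * (1 - e * s) * (u * v) \<le> e * (1 - e * s) * ((1 + e) * v)"
    using es by (intro mult_left_mono) auto
  then have h3: "e * (e * s - 1) * u * v \<ge> - (e * (1 - e * s) * ((1 + e) * v))"
    by (simp add: algebra_simps)
  have key: "(1 - e^2) / 2 * (3 * (e * v)) - e * (1 - e * s) * ((1 + e) * v)
      = e * v * (1 + e) * (1/2 - e * (3/2 - s))"
    by (simp add: field_simps power2_eq_square)
  have "e * v * (1 + e) * (1/2 - e * (3/2 - s)) \<ge> 0"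
    using assms v0 by (intro mult_nonneg_nonneg) auto
  then show ?thesis using h2'' h3 key unfolding u_def[symmetric] v_def[symmetric] by linarith
qed


lemma pow_split: "d \<ge> 1 \<Longrightarrow> (a::real) ^ d = a * a ^ (d - 1)"
  by (metis One_nat_def Suc_diff_le diff_Suc_1 power_Suc)

lemma cont_g: "continuous_on {-1..1}
     (\<lambda>z. (1 - z^2) * (xa * (xa * sa - 1) * PP d1 d2 x1 x2 z + (1 - xa^2) / 2 * DP d1 d2 x1 x2 z))"
  unfolding PP_def DP_def by (intro continuous_intros)

lemma edge_left:
  fixes e s x2 :: real
  assumes "0 < e" "e < 1" "e \<le> x2" "x2 \<le> 1" "d1 \<ge> 1" "d2 \<ge> 1" "d1 + d2 \<ge> 3"
    "e * (3/2 - s) \<le> 1/2" "e * s \<le> 1"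
  shows "h_fun d1 d2 e s e x2 \<ge> 0"
  unfolding ibp
proof (rule integral_nonneg)
  show "(\<lambda>z. (1 - z^2) * (e * (e * s - 1) * PP d1 d2 e x2 z + (1 - e^2) / 2 * DP d1 d2 e x2 z))
     integrable_on {-1..1}"
    by (rule integrable_continuous_interval[OF cont_g])
  fix z :: real assume z: "z \<in> {-1..1}"
  define u where "u = 1 + e * z"
  define v where "v = 1 + x2 * z"
  have ax: "\<bar>x2 * z\<bar> \<le> 1" unfolding abs_mult using assms z by (intro mult_le_one) auto
  have ae: "\<bar>e * z\<bar> \<le> 1" unfolding abs_mult using assms z by (intro mult_le_one) auto
  have v0: "v \<ge> 0" unfolding v_def using ax by (simp add: abs_le_iff)
  have u0: "u \<ge> 0" unfolding u_def using ae by (simp add: abs_le_iff)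
  have Q: "0 \<le> e * (e * s - 1) * u * v + (1 - e^2) / 2 * (real d1 * e * v + real d2 * x2 * u)"
    unfolding u_def v_def using assms z
    by (intro Q_nonneg) auto
  have eq: "e * (e * s - 1) * PP d1 d2 e x2 z + (1 - e^2) / 2 * DP d1 d2 e x2 z
      = (u ^ (d1 - 1) * v ^ (d2 - 1)) * (e * (e * s - 1) * u * v + (1 - e^2) / 2 * (real d1 * e * v + real d2 * x2 * u))"
    unfolding PP_def DP_def u_def[symmetric] v_def[symmetric]
    using pow_split[OF assms(5), of u] pow_split[OF assms(6), of v]
    by (simp add: algebra_simps)
  have z2: "1 - z^2 \<ge> 0" using z by (simp add: abs_le_iff power_le_one abs_square_le_1)
  show "0 \<le> (1 - z^2) * (e * (e * s - 1) * PP d1 d2 e x2 z + (1 - e^2) / 2 * DP d1 d2 e x2 z)"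
    unfolding eq using z2 Q u0 v0 by (intro mult_nonneg_nonneg zero_le_power) auto
qed

lemma edge_bottom:
  fixes e s x1 :: real
  assumes "0 < e" "e < 1" "e \<le> x1" "x1 \<le> 1" "d1 \<ge> 1" "d2 \<ge> 1" "d1 + d2 \<ge> 3"
    "e * (3/2 - s) \<le> 1/2" "e * s \<le> 1"
  shows "h_fun d1 d2 e s x1 e \<ge> 0"
  unfolding ibp
proof (rule integral_nonneg)
  show "(\<lambda>z. (1 - z^2) * (e * (e * s - 1) * PP d1 d2 x1 e z + (1 - e^2) / 2 * DP d1 d2 x1 e z))
     integrable_on {-1..1}"
    by (rule integrable_continuous_interval[OF cont_g])
  fix z :: real assume z: "z \<in> {-1..1}"
  define u where "u = 1 + x1 * z"
  define v where "v = 1 + e * z"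
  have ax: "\<bar>x1 * z\<bar> \<le> 1" unfolding abs_mult using assms z by (intro mult_le_one) auto
  have ae: "\<bar>e * z\<bar> \<le> 1" unfolding abs_mult using assms z by (intro mult_le_one) auto
  have u0: "u \<ge> 0" unfolding u_def using ax by (simp add: abs_le_iff)
  have v0: "v \<ge> 0" unfolding v_def using ae by (simp add: abs_le_iff)
  have Q0: "0 \<le> e * (e * s - 1) * (1 + e * z) * (1 + x1 * z) + (1 - e^2) / 2 * (real d2 * e * (1 + x1 * z) + real d1 * x1 * (1 + e * z))"
    using assms z by (intro Q_nonneg) auto
  have Q: "0 \<le> e * (e * s - 1) * u * v + (1 - e^2) / 2 * (real d1 * x1 * v + real d2 * e * u)"
    using Q0 unfolding u_def v_def by (simp add: algebra_simps)
  have eq: "e * (e * s - 1) * PP d1 d2 x1 e z + (1 - e^2) / 2 * DP d1 d2 x1 e z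
      = (u ^ (d1 - 1) * v ^ (d2 - 1)) * (e * (e * s - 1) * u * v + (1 - e^2) / 2 * (real d1 * x1 * v + real d2 * e * u))"
    unfolding PP_def DP_def u_def[symmetric] v_def[symmetric]
    using pow_split[OF assms(5), of u] pow_split[OF assms(6), of v]
    by (simp add: algebra_simps)
  have z2: "1 - z^2 \<ge> 0" using z by (simp add: abs_le_iff power_le_one abs_square_le_1)
  show "0 \<le> (1 - z^2) * (e * (e * s - 1) * PP d1 d2 x1 e z + (1 - e^2) / 2 * DP d1 d2 x1 e z)"
    unfolding eq using z2 Q u0 v0 by (intro mult_nonneg_nonneg zero_le_power) auto
qed


lemma neg_aux:
  fixes x z s :: real
  assumes "0 \<le> x" "x \<le> 1" "-1 < z" "z < 1" "s < 1"
  shows "(1 + z) ^ d1 * (1 + x * z) ^ d2 * ((s - 1) * (1 - z^2)) < 0"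
proof -
  have "\<bar>x * z\<bar> \<le> \<bar>z\<bar>" unfolding abs_mult using assms
    by (intro mult_left_le_one_le) auto
  moreover have "\<bar>z\<bar> < 1" using assms by auto
  ultimately have "\<bar>x * z\<bar> < 1" by linarith
  then have a: "1 + x * z > 0" by (simp add: abs_less_iff)
  have b: "1 + z > 0" using assms by simp
  have c: "1 - z^2 > 0" using assms by (simp add: abs_less_iff abs_square_less_1)
  have "(s - 1) * (1 - z^2) < 0" using c assms by (simp add: mult_neg_pos)
  moreover have "(1 + z) ^ d1 * (1 + x * z) ^ d2 > 0" using a b by simp
  ultimately show ?thesis by (simp add: mult_pos_neg)
qed

lemma edge_right:
  fixes s x2 :: real
  assumes "s < 1" "0 \<le> x2" "x2 \<le> 1"
  shows "h_fun d1 d2 1 s 1 x2 < 0"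
proof -
  have "integral {-1..1} (\<lambda>z. (1 + 1 * z) ^ d1 * (1 + x2 * z) ^ d2 *
        (1 * (1 * s - 1) * (1 - z^2) + z * (1 - 1^2))) < integral {-1..1} (\<lambda>z::real. 0::real)"
    by (rule integral_less_real[of "-1" 1 _ "\<lambda>z. 0"]) (auto intro!: continuous_intros neg_aux assms)
  then show ?thesis unfolding h_fun_def by simp
qed

lemma edge_top:
  fixes s x1 :: real
  assumes "s < 1" "0 \<le> x1" "x1 \<le> 1"
  shows "h_fun d1 d2 1 s x1 1 < 0"
proof -
  have "integral {-1..1} (\<lambda>z. (1 + x1 * z) ^ d1 * (1 + 1 * z) ^ d2 *
        (1 * (1 * s - 1) * (1 - z^2) + z * (1 - 1^2))) < integral {-1..1} (\<lambda>z::real. 0::real)"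
    apply (rule integral_less_real[of "-1" 1 _ "\<lambda>z. 0"])
    using neg_aux[OF assms(2,3) _ _ assms(1), of _ d2 d1]
    by (auto intro!: continuous_intros simp: mult_ac)
  then show ?thesis unfolding h_fun_def by simp
qed


lemma cont_h:
  "continuous_on UNIV (\<lambda>p::real\<times>real. h_fun d1 d2 (g p) s (fst p) (snd p))"
  if "continuous_on UNIV g" for g :: "real \<times> real \<Rightarrow> real"
proof -
  have "continuous_on UNIV (\<lambda>p. integral (cbox (-1) 1) (\<lambda>z::real. (1 + fst p * z) ^ d1 * (1 + snd p * z) ^ d2 *
        (g p * (g p * s - 1) * (1 - z^2) + z * (1 - (g p)^2))))"
    apply (rule integral_continuous_on_param)
    unfolding split_beta
    by (intro continuous_intros continuous_on_compose2[OF that, of _ fst] ) auto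
  then show ?thesis unfolding h_fun_def by simp
qed

lemma clamp_fix:
  fixes e x t :: real
  assumes "e \<le> x" "x \<le> 1" "max e (min 1 (x + t)) = x"
    "x = 1 \<Longrightarrow> t < 0" "x = e \<Longrightarrow> t \<ge> 0"
  shows "t = 0" "x < 1"
proof -
  show "t = 0"
  proof (cases "t > 0")
    case True
    then show ?thesis using assms by (auto simp: max_def min_def split: if_splits)
  next
    case False
    then show ?thesis using assms by (auto simp: max_def min_def split: if_splits)
  qed
  then show "x < 1" using assms by force
qed

theorem lemma3p6:
  fixes d1 d2 :: nat and s1 s2 :: real
  assumes "d1 \<ge> 1" and "d2 \<ge> 1" and "\<not> (d1 = 1 \<and> d2 = 1)"
    and "s1 < 1" and "s2 < 1"
  shows "\<exists>x1 x2. x1 \<in> {0<..<1} \<and> x2 \<in> {0<..<1} \<and>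
           h_fun d1 d2 x1 s1 x1 x2 = 0 \<and> h_fun d1 d2 x2 s2 x1 x2 = 0"
proof -
  define m where "m = min s1 s2"
  define e where "e = 1 / (4 - 2 * m)"
  have m1: "m < 1" "m \<le> s1" "m \<le> s2" using assms unfolding m_def by auto
  have e0: "0 < e" "e < 1" unfolding e_def using m1 by (auto simp: field_simps)
  have em: "e * (3/2 - m) \<le> 1/2" unfolding e_def using m1 by (auto simp: field_simps)
  have es1: "e * (3/2 - s1) \<le> 1/2"
    using em e0 m1 by (smt (verit) mult_left_mono)
  have es2: "e * (3/2 - s2) \<le> 1/2"
    using em e0 m1 by (smt (verit) mult_left_mono)
  have es1': "e * s1 \<le> 1"
    using e0 assms by (smt (verit) mult_left_le_one_le mult_nonneg_nonneg mult_pos_neg)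
  have es2': "e * s2 \<le> 1"
    using e0 assms by (smt (verit) mult_left_le_one_le mult_nonneg_nonneg mult_pos_neg)
  have d3: "d1 + d2 \<ge> 3" using assms by auto
  define H1 where "H1 = (\<lambda>p::real\<times>real. h_fun d1 d2 (fst p) s1 (fst p) (snd p))"
  define H2 where "H2 = (\<lambda>p::real\<times>real. h_fun d1 d2 (snd p) s2 (fst p) (snd p))"
  define c where "c = (\<lambda>t::real. max e (min 1 t))"
  define T where "T = (\<lambda>p. (c (fst p + H1 p), c (snd p + H2 p)))"
  define S where "S = {e..1} \<times> {e..(1::real)}"
  have cH1: "continuous_on UNIV H1" unfolding H1_def
    by (rule cont_h) (intro continuous_intros)
  have cH2: "continuous_on UNIV H2" unfolding H2_def
    by (rule cont_h) (intro continuous_intros)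
  have contT: "continuous_on S T"
    unfolding T_def c_def
    by (intro continuous_intros continuous_on_subset[OF cH1] continuous_on_subset[OF cH2]) auto
  have TS: "T \<in> S \<rightarrow> S" unfolding T_def S_def c_def using e0 by auto
  have "compact S" "convex S" "S \<noteq> {}" unfolding S_def using e0
    by (auto intro!: compact_Times convex_Times)
  then obtain p where pS: "p \<in> S" and fp: "T p = p"
    using brouwer[OF _ _ _ contT TS] by blast
  obtain x1 x2 where p: "p = (x1, x2)" by fastforce
  have x: "e \<le> x1" "x1 \<le> 1" "e \<le> x2" "x2 \<le> 1" using pS p S_def by auto
  have f1: "max e (min 1 (x1 + H1 p)) = x1" using fp p unfolding T_def c_def by simp
  have f2: "max e (min 1 (x2 + H2 p)) = x2" using fp p unfolding T_def c_def by simp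
  have r1: "H1 p < 0" if "x1 = 1"
    unfolding H1_def p using that x e0 edge_right[OF assms(4), of x2 d1 d2] by simp
  have l1: "H1 p \<ge> 0" if "x1 = e"
    unfolding H1_def p using that x e0 edge_left[of e x2 d1 d2 s1] assms d3 es1 es1' by simp
  have r2: "H2 p < 0" if "x2 = 1"
    unfolding H2_def p using that x e0 edge_top[OF assms(5), of x1 d1 d2] by simp
  have l2: "H2 p \<ge> 0" if "x2 = e"
    unfolding H2_def p using that x e0 edge_bottom[of e x1 d1 d2 s2] assms d3 es2 es2' by simp
  have a1: "H1 p = 0" "x1 < 1" using clamp_fix[OF x(1,2) f1 r1 l1] by auto
  have a2: "H2 p = 0" "x2 < 1" using clamp_fix[OF x(3,4) f2 r2 l2] by auto
  show ?thesis
    apply (rule exI[of _ x1], rule exI[of _ x2])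
    using a1 a2 x e0 unfolding H1_def H2_def p by auto
qed

end
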